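(* Every $L$-selective $T_1$-space is an $\alpha_1$-space.
   Context: For spaces $Y$, $X$, a map $\varphi:Y\to\mathcal P(X)\setminus\{\emptyset\}$ is lower semicontinuous (l.s.c.) if $\{y:\varphi(y)\cap U\neq\emptyset\}$ is open in $Y$ for every open $U\subseteq X$; a selection is a map $f:Y\to X$ with $f(y)\in\varphi(y)$ for all $y$. $X$ is $Y$-selective if every l.s.c. map from $Y$ to the family of nonempty closed subsets of $X$ has a continuous selection. $X$ is $L$-selective if it is $(\omega+1)$-selective, where $\omega+1$ carries the order topology (a convergent sequence with its limit). A space $X$ is an $\alpha_1$-space if for every $x\in X$ and every countable family $\{A_n\}_{n\in\omega}$ of sequences converging to $x$ there is a sequence $A$ converging to $x$ such that $A_n\setminus A$ is finite for every $n$. *)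

theory Defs
  imports "HOL-Analysis.Analysis" "HOL-Library.Extended_Nat"
begin

text \<open>The space omega+1 with its order topology, realised on enat (infinity = omega):
  every finite point is isolated, and the neighbourhoods of infinity are the cofinal sets.\<close>
definition omega_plus_one :: "enat topology" where
  "omega_plus_one = topology (\<lambda>U. \<infinity> \<in> U \<longrightarrow> (\<exists>n. \<forall>m\<ge>n. enat m \<in> U))"

definition lsc_closed_valued :: "'b topology \<Rightarrow> 'a topology \<Rightarrow> ('b \<Rightarrow> 'a set) \<Rightarrow> bool" where
  "lsc_closed_valued Y X \<phi> \<longleftrightarrow>
     (\<forall>y\<in>topspace Y. \<phi> y \<noteq> {} \<and> closedin X (\<phi> y)) \<and>
     (\<forall>U. openin X U \<longrightarrow> openin Y {y \<in> topspace Y. \<phi> y \<inter> U \<noteq> {}})"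

definition selective :: "'b topology \<Rightarrow> 'a topology \<Rightarrow> bool" where
  "selective Y X \<longleftrightarrow>
     (\<forall>\<phi>. lsc_closed_valued Y X \<phi> \<longrightarrow>
        (\<exists>f. continuous_map Y X f \<and> (\<forall>y\<in>topspace Y. f y \<in> \<phi> y)))"

definition L_selective :: "'a topology \<Rightarrow> bool" where
  "L_selective X \<longleftrightarrow> selective omega_plus_one X"

text \<open>alpha_1-space: sequences are maps nat => X, and "A_n minus A" is the difference of their
  sets of terms.\<close>
definition alpha1_space :: "'a topology \<Rightarrow> bool" where
  "alpha1_space X \<longleftrightarrow>
     (\<forall>x\<in>topspace X. \<forall>A :: nat \<Rightarrow> nat \<Rightarrow> 'a.
        (\<forall>n. range (A n) \<subseteq> topspace X \<and> limitin X (A n) x sequentially) \<longrightarrow>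
        (\<exists>S :: nat \<Rightarrow> 'a. range S \<subseteq> topspace X \<and> limitin X S x sequentially \<and>
            (\<forall>n. finite (range (A n) - range S))))"

end

theory Submission
  imports Defs
begin

lemma om_istop: "istopology (\<lambda>U. \<infinity> \<in> U \<longrightarrow> (\<exists>n. \<forall>m\<ge>n. enat m \<in> (U::enat set)))"
  unfolding istopology_def
proof (intro conjI allI impI)
  fix S T :: "enat set"
  assume S: "\<infinity> \<in> S \<longrightarrow> (\<exists>n. \<forall>m\<ge>n. enat m \<in> S)" and T: "\<infinity> \<in> T \<longrightarrow> (\<exists>n. \<forall>m\<ge>n. enat m \<in> T)"
    and ST: "\<infinity> \<in> S \<inter> T"
  then obtain a b where a: "\<forall>m\<ge>a. enat m \<in> S" and b: "\<forall>m\<ge>b. enat m \<in> T" by auto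
  show "\<exists>n. \<forall>m\<ge>n. enat m \<in> S \<inter> T"
    by (rule exI[of _ "max a b"]) (use a b in auto)
next
  fix K :: "enat set set"
  assume K: "\<forall>U\<in>K. \<infinity> \<in> U \<longrightarrow> (\<exists>n. \<forall>m\<ge>n. enat m \<in> U)" and "\<infinity> \<in> \<Union>K"
  then show "\<exists>n. \<forall>m\<ge>n. enat m \<in> \<Union>K"
    by blast
qed

lemma om_open: "openin omega_plus_one U \<longleftrightarrow> (\<infinity> \<in> U \<longrightarrow> (\<exists>n. \<forall>m\<ge>n. enat m \<in> U))"
  unfolding omega_plus_one_def using om_istop by (simp add: topology_inverse')

lemma om_top: "topspace omega_plus_one = UNIV"
  unfolding topspace_def using om_open by auto

lemma om_cont:
  assumes "continuous_map omega_plus_one X f"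
  shows "limitin X (\<lambda>m. f (enat m)) (f \<infinity>) sequentially"
  unfolding limitin_sequentially
proof (intro conjI allI impI)
  show "f \<infinity> \<in> topspace X" using assms om_top by (auto simp: continuous_map_def)
  fix U assume U: "openin X U \<and> f \<infinity> \<in> U"
  then have "openin omega_plus_one {x \<in> topspace omega_plus_one. f x \<in> U}"
    using assms by (auto simp: continuous_map_def)
  then have "\<exists>n. \<forall>m\<ge>n. enat m \<in> {x \<in> topspace omega_plus_one. f x \<in> U}"
    using U om_open om_top by auto
  then show "\<exists>N. \<forall>n. N \<le> n \<longrightarrow> f (enat n) \<in> U" by auto
qed

theorem mainTheorem3:
  fixes X :: "'a topology"
  assumes t1: "t1_space X" and Ls: "L_selective X"
  shows "alpha1_space X"
  unfolding alpha1_space_def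
proof (intro ballI allI impI)
  fix x and A :: "nat \<Rightarrow> nat \<Rightarrow> 'a"
  assume x: "x \<in> topspace X"
    and HA: "\<forall>n. range (A n) \<subseteq> topspace X \<and> limitin X (A n) x sequentially"
  show "\<exists>S. range S \<subseteq> topspace X \<and> limitin X S x sequentially \<and> (\<forall>n. finite (range (A n) - range S))"
  proof (cases "\<exists>p. (\<forall>k. p k \<in> topspace X \<and> p k \<noteq> x) \<and> limitin X p x sequentially")
    case False
    have "finite (range (A n) - range (\<lambda>_::nat. x))" for n
    proof (rule ccontr)
      assume inf: "infinite (range (A n) - range (\<lambda>_::nat. x))"
      define J where "J = {j. A n j \<noteq> x}"
      have sub: "range (A n) - range (\<lambda>_::nat. x) \<subseteq> A n ` J" unfolding J_def by auto
      have iJ: "infinite J"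
      proof
        assume "finite J"
        then have "finite (A n ` J)" by simp
        then have "finite (range (A n) - range (\<lambda>_::nat. x))" by (rule finite_subset[OF sub])
        then show False using inf by contradiction
      qed
      define p where "p = A n \<circ> enumerate J"
      have "limitin X p x sequentially"
        unfolding p_def by (rule limitin_subsequence[OF strict_mono_enumerate[OF iJ]]) (use HA in blast)
      moreover have "p k \<in> topspace X \<and> p k \<noteq> x" for k
        using enumerate_in_set[OF iJ, of k] HA unfolding p_def J_def by auto
      ultimately show False using False by blast
    qed
    then show ?thesis using x by (intro exI[of _ "\<lambda>_. x"]) auto
  next
    case True
    then obtain p where p: "\<And>k. p k \<in> topspace X" "\<And>k. p k \<noteq> x" and plim: "limitin X p x sequentially"
      by blast
    define \<phi> :: "enat \<Rightarrow> 'a set" where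
      "\<phi> y = (if y = \<infinity> then {x} else
          {p (fst (prod_decode (the_enat y))), A (fst (prod_decode (the_enat y))) (snd (prod_decode (the_enat y)))})" for y
    have phi_fin: "\<phi> (enat m) = {p (fst (prod_decode m)), A (fst (prod_decode m)) (snd (prod_decode m))}" for m
      unfolding \<phi>_def by simp
    have phi_inf: "\<phi> \<infinity> = {x}" unfolding \<phi>_def by simp
    have lsc: "lsc_closed_valued omega_plus_one X \<phi>"
      unfolding lsc_closed_valued_def om_top
    proof (intro conjI ballI allI impI)
      fix y :: enat
      show "\<phi> y \<noteq> {}" unfolding \<phi>_def by auto
      have HA': "A n j \<in> topspace X" for n j using HA by auto
      have "\<phi> y \<subseteq> topspace X" unfolding \<phi>_def using x p HA' by auto
      moreover have "finite (\<phi> y)" unfolding \<phi>_def by auto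
      ultimately show "closedin X (\<phi> y)" using t1 unfolding t1_space_closedin_finite by blast
    next
      fix U assume U: "openin X U"
      show "openin omega_plus_one {y \<in> UNIV. \<phi> y \<inter> U \<noteq> {}}"
        unfolding om_open
      proof
        assume "\<infinity> \<in> {y \<in> UNIV. \<phi> y \<inter> U \<noteq> {}}"
        then have xU: "x \<in> U" using phi_inf by auto
        obtain K where K: "\<And>k. k \<ge> K \<Longrightarrow> p k \<in> U"
          using plim U xU unfolding limitin_sequentially by blast
        have "\<forall>k. \<exists>J. \<forall>j\<ge>J. A k j \<in> U"
          using HA U xU unfolding limitin_sequentially by blast
        then obtain J where J: "\<And>k j. j \<ge> J k \<Longrightarrow> A k j \<in> U" by metis
        define Jm where "Jm = Max (J ` {..<K})"
        define B where "B = prod_encode ` ({..<K} \<times> {..<Suc Jm})"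
        have fB: "finite B" unfolding B_def by auto
        have bad: "m \<in> B" if "\<phi> (enat m) \<inter> U = {}" for m
        proof -
          obtain k j where kj: "prod_decode m = (k, j)" by fastforce
          have "p k \<notin> U" "A k j \<notin> U" using that kj phi_fin[of m] by auto
          then have "k < K" "j < J k" using K J by (meson not_le)+
          have "J k \<le> Jm" unfolding Jm_def using \<open>k < K\<close> by (intro Max_ge) auto
          then have "j < Suc Jm" using \<open>j < J k\<close> by simp
          moreover have "m = prod_encode (k, j)" using kj by (metis prod_decode_inverse)
          ultimately show ?thesis unfolding B_def using \<open>k < K\<close> by auto
        qed
        obtain N where N: "\<And>m. m \<in> B \<Longrightarrow> m < N"
          using finite_nat_bounded[OF fB] by auto
        show "\<exists>n. \<forall>m\<ge>n. enat m \<in> {y \<in> UNIV. \<phi> y \<inter> U \<noteq> {}}"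
        proof (intro exI allI impI)
          fix m assume "N \<le> m"
          then have "m \<notin> B" using N by (meson not_le)
          then have "\<phi> (enat m) \<inter> U \<noteq> {}" using bad by blast
          then show "enat m \<in> {y \<in> UNIV. \<phi> y \<inter> U \<noteq> {}}" by simp
        qed
      qed
    qed
    have "\<forall>\<phi>. lsc_closed_valued omega_plus_one X \<phi> \<longrightarrow>
        (\<exists>f. continuous_map omega_plus_one X f \<and> (\<forall>y\<in>UNIV. f y \<in> \<phi> y))"
      using Ls unfolding L_selective_def selective_def om_top by simp
    then have "\<exists>f. continuous_map omega_plus_one X f \<and> (\<forall>y\<in>UNIV. f y \<in> \<phi> y)"
      using lsc by blast
    then obtain f where fc: "continuous_map omega_plus_one X f" and fs: "\<And>y. f y \<in> \<phi> y"
      by blast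
    have finf: "f \<infinity> = x" using fs[of \<infinity>] phi_inf by auto
    have flim: "limitin X (\<lambda>m. f (enat m)) x sequentially" using om_cont[OF fc] finf by simp
    have ftop: "f y \<in> topspace X" for y
      using continuous_map_image_subset_topspace[OF fc] om_top by blast
    define g where "g k j = f (enat (prod_encode (k, j)))" for k j
    have g: "g k j = p k \<or> g k j = A k j" for k j
      using fs[of "enat (prod_encode (k, j))"] phi_fin[of "prod_encode (k, j)"] unfolding g_def by simp
    define E where "E k = {j. g k j \<noteq> A k j}" for k
    have Efin: "finite (E k)" for k
    proof (rule ccontr)
      assume inf: "infinite (E k)"
      obtain U where U: "openin X U" "x \<in> U" "p k \<notin> U"
      proof -
        have "x \<noteq> p k" using p(2)[of k] by metis
        then show ?thesis using that t1 x p(1)[of k] unfolding t1_space_def by blast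
      qed
      obtain N where N: "\<And>m. m \<ge> N \<Longrightarrow> f (enat m) \<in> U"
        using flim U unfolding limitin_sequentially by blast
      obtain j where j: "j \<in> E k" "j \<ge> N" using inf unfolding infinite_nat_iff_unbounded_le by blast
      have "g k j = p k" using j(1) g[of k j] unfolding E_def by auto
      moreover have "g k j \<in> U" unfolding g_def
        using N le_prod_encode_2[of j k] j by (meson order.trans)
      ultimately show False using U by simp
    qed
    define S where "S m = (if f (enat m) = A (fst (prod_decode m)) (snd (prod_decode m)) then f (enat m) else x)" for m
    have Sm: "S m = f (enat m) \<or> S m = x" for m unfolding S_def by simp
    have "S m \<in> topspace X" for m using Sm[of m] ftop[of "enat m"] x by metis
    then have "range S \<subseteq> topspace X" by blast
    moreover have "limitin X S x sequentially"
      unfolding limitin_sequentially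
    proof (intro conjI allI impI)
      show "x \<in> topspace X" by fact
      fix U assume U: "openin X U \<and> x \<in> U"
      then obtain N where "\<And>m. m \<ge> N \<Longrightarrow> f (enat m) \<in> U"
        using flim unfolding limitin_sequentially by blast
      then have "\<forall>n. N \<le> n \<longrightarrow> S n \<in> U" using U Sm by metis
      then show "\<exists>N. \<forall>n. N \<le> n \<longrightarrow> S n \<in> U" by blast
    qed
    moreover have "finite (range (A k) - range S)" for k
    proof -
      have "range (A k) - range S \<subseteq> A k ` E k"
      proof
        fix z assume z: "z \<in> range (A k) - range S"
        then obtain j where j: "z = A k j" by auto
        have "j \<in> E k"
        proof (rule ccontr)
          assume "j \<notin> E k"
          then have "S (prod_encode (k, j)) = A k j" unfolding E_def g_def S_def by auto
          then have "A k j \<in> range S" by (metis rangeI)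
          then show False using z j by auto
        qed
        then show "z \<in> A k ` E k" using j by auto
      qed
      then show ?thesis by (rule finite_subset) (simp add: Efin)
    qed
    ultimately show ?thesis by blast
  qed
qed

end
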